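(* Let $a$ and $b$ be two disjoint finite groups of instances, each instance carrying a binary label, and let $\mathrm{p}^a$ and $\mathrm{p}^b$ be fixed orderings of the instances of $a$ and of $b$, respectively. Assume $n_1^a,n_0^a,n_1^b,n_0^b\ge 1$. Then: (i) there exists a cross-group ordering $o$ of $(\mathrm{p}^a,\mathrm{p}^b)$ with $\Delta\mathrm{URF}^o \le \min(1/n^a,\,1/n^b)$; (ii) there exists a cross-group ordering $o$ with $\Delta\mathrm{xAUC}^o \le \min\big(\max(1/n_1^b,1/n_0^b),\ \max(1/n_1^a,1/n_0^a)\big)$; (iii) there exists a cross-group ordering $o$ with $\Delta\mathrm{PRF}^o \le \min\big(\max(n_0^b/(n_1^a n_0),\,1/n_0),\ \max(n_0^a/(n_1^b n_0),\,1/n_0)\big)$.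
   Context: Each instance $u$ has a label $Y_u\in\{0,1\}$. For a group $g\in\{a,b\}$: $n^g$ is the number of instances in $g$, $n^g_1$ the number with label 1, $n^g_0$ the number with label 0; $n_1=n_1^a+n_1^b$, $n_0=n_0^a+n_0^b$. A cross-group ordering $o$ of $(\mathrm{p}^a,\mathrm{p}^b)$ is a total order (a list) of all instances of $a\cup b$ in which the instances of $a$ appear in the same relative order as in $\mathrm{p}^a$ and the instances of $b$ in the same relative order as in $\mathrm{p}^b$. "$u$ precedes $v$ in $o$" means $u$ is ranked above $v$. Metrics induced by $o$: $\mathrm{xAUC}^o(a,b)=\frac{1}{n_1^a n_0^b}\#\{(u,v): u\in a, Y_u=1, v\in b, Y_v=0, u \text{ precedes } v\}$, and $\mathrm{xAUC}^o(b,a)$ symmetrically; $\Delta\mathrm{xAUC}^o=|\mathrm{xAUC}^o(a,b)-\mathrm{xAUC}^o(b,a)|$. $\Delta\mathrm{URF}^o=\frac{1}{n^a n^b}\big|\#\{(u,v):u\in a,v\in b,u\text{ precedes }v\}-\#\{(u,v):u\in a,v\in b,v\text{ precedes }u\}\big|$. $\mathrm{PRF}^o(a)=\frac{1}{n_1^a n_0}\#\{(u,v): u\in a, Y_u=1, Y_v=0, u\text{ precedes } v\}$ (with $v$ ranging over negatives of both groups), $\mathrm{PRF}^o(b)$ symmetrically; $\Delta\mathrm{PRF}^o=|\mathrm{PRF}^o(a)-\mathrm{PRF}^o(b)|$. *)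

theory Defs
  imports Complex_Main
begin

text \<open>Instances are elements of a type 'i; a group is given by its fixed ordering,
a distinct list (head = top-ranked). Labels are Y :: 'i => bool (True = label 1).\<close>

definition precedes :: "'i list \<Rightarrow> 'i \<Rightarrow> 'i \<Rightarrow> bool" where
  "precedes ord u v \<longleftrightarrow> (\<exists>i j. i < j \<and> j < length ord \<and> ord ! i = u \<and> ord ! j = v)"

definition cross_group_ordering :: "'i list \<Rightarrow> 'i list \<Rightarrow> 'i list \<Rightarrow> bool" where
  "cross_group_ordering pa pb ord \<longleftrightarrow> ord \<in> shuffles pa pb"

definition npos :: "('i \<Rightarrow> bool) \<Rightarrow> 'i list \<Rightarrow> nat" where
  "npos Y p = card {u \<in> set p. Y u}"

definition nneg :: "('i \<Rightarrow> bool) \<Rightarrow> 'i list \<Rightarrow> nat" where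
  "nneg Y p = card {u \<in> set p. \<not> Y u}"

definition xAUC :: "('i \<Rightarrow> bool) \<Rightarrow> 'i list \<Rightarrow> 'i list \<Rightarrow> 'i list \<Rightarrow> real" where
  "xAUC Y ord pa pb =
     real (card {(u, v). u \<in> set pa \<and> Y u \<and> v \<in> set pb \<and> \<not> Y v \<and> precedes ord u v})
     / (real (npos Y pa) * real (nneg Y pb))"

definition delta_xAUC :: "('i \<Rightarrow> bool) \<Rightarrow> 'i list \<Rightarrow> 'i list \<Rightarrow> 'i list \<Rightarrow> real" where
  "delta_xAUC Y ord pa pb = \<bar>xAUC Y ord pa pb - xAUC Y ord pb pa\<bar>"

definition delta_URF :: "'i list \<Rightarrow> 'i list \<Rightarrow> 'i list \<Rightarrow> real" where
  "delta_URF ord pa pb =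
     \<bar>real (card {(u, v). u \<in> set pa \<and> v \<in> set pb \<and> precedes ord u v})
      - real (card {(u, v). u \<in> set pa \<and> v \<in> set pb \<and> precedes ord v u})\<bar>
     / (real (length pa) * real (length pb))"

definition PRF :: "('i \<Rightarrow> bool) \<Rightarrow> 'i list \<Rightarrow> 'i list \<Rightarrow> 'i list \<Rightarrow> real" where
  "PRF Y ord pa pb =
     real (card {(u, v). u \<in> set pa \<and> Y u \<and> v \<in> set pa \<union> set pb \<and> \<not> Y v \<and> precedes ord u v})
     / (real (npos Y pa) * real (nneg Y pa + nneg Y pb))"

definition delta_PRF :: "('i \<Rightarrow> bool) \<Rightarrow> 'i list \<Rightarrow> 'i list \<Rightarrow> 'i list \<Rightarrow> real" where
  "delta_PRF Y ord pa pb = \<bar>PRF Y ord pa pb - PRF Y ord pb pa\<bar>"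

end

theory Submission imports Defs begin

lemma precedes_Nil[simp]: "\<not> precedes [] u v"
  by (simp add: precedes_def)

lemma precedes_Cons[simp]:
  "precedes (x#xs) u v \<longleftrightarrow> (u = x \<and> v \<in> set xs) \<or> precedes xs u v"
proof
  assume "precedes (x#xs) u v"
  then obtain i j where ij: "i < j" "j < length (x#xs)" "(x#xs)!i = u" "(x#xs)!j = v"
    unfolding precedes_def by blast
  show "(u = x \<and> v \<in> set xs) \<or> precedes xs u v"
  proof (cases i)
    case 0
    then obtain j' where "j = Suc j'" using ij by (cases j) auto
    then show ?thesis using ij 0 by (auto simp: in_set_conv_nth)
  next
    case (Suc i')
    then obtain j' where "j = Suc j'" using ij by (cases j) auto
    then have "i' < j' \<and> j' < length xs \<and> xs!i' = u \<and> xs!j' = v" using ij Suc by auto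
    then show ?thesis unfolding precedes_def by blast
  qed
next
  assume "(u = x \<and> v \<in> set xs) \<or> precedes xs u v"
  then show "precedes (x#xs) u v"
  proof
    assume "u = x \<and> v \<in> set xs"
    then obtain j where "j < length xs" "xs!j = v" "u = x" by (auto simp: in_set_conv_nth)
    then have "0 < Suc j \<and> Suc j < length (x#xs) \<and> (x#xs)!0 = u \<and> (x#xs)!Suc j = v" by auto
    then show ?thesis unfolding precedes_def by blast
  next
    assume "precedes xs u v"
    then obtain i j where "i < j" "j < length xs" "xs!i = u" "xs!j = v"
      unfolding precedes_def by blast
    then have "Suc i < Suc j \<and> Suc j < length (x#xs) \<and> (x#xs)!Suc i = u \<and> (x#xs)!Suc j = v" by auto
    then show ?thesis unfolding precedes_def by blast
  qed
qed

lemma precedes_append: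
  "precedes (xs@ys) u v \<longleftrightarrow> precedes xs u v \<or> precedes ys u v \<or> (u \<in> set xs \<and> v \<in> set ys)"
  by (induction xs) auto

lemma precedes_set: "precedes xs u v \<Longrightarrow> u \<in> set xs \<and> v \<in> set xs"
  by (induction xs) auto

lemma precedes_swap:
  "precedes (xs@u#v#ys) p q \<Longrightarrow> \<not>(p = u \<and> q = v) \<Longrightarrow> precedes (xs@v#u#ys) p q"
  by (auto simp: precedes_append)

definition C :: "('i \<Rightarrow> 'i \<Rightarrow> bool) \<Rightarrow> 'i list \<Rightarrow> ('i \<times> 'i) set" where
  "C Q ord = {(p,q). Q p q \<and> precedes ord p q}"
definition D :: "('i \<Rightarrow> 'i \<Rightarrow> bool) \<Rightarrow> 'i list \<Rightarrow> ('i \<times> 'i) set" where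
  "D Q ord = {(p,q). Q p q \<and> precedes ord q p}"

lemma finite_C: "finite (C Q ord)"
proof -
  have "C Q ord \<subseteq> set ord \<times> set ord" by (auto simp: C_def dest: precedes_set)
  then show ?thesis by (rule finite_subset) auto
qed
lemma finite_D: "finite (D Q ord)"
proof -
  have "D Q ord \<subseteq> set ord \<times> set ord" by (auto simp: D_def dest: precedes_set)
  then show ?thesis by (rule finite_subset) auto
qed

lemma card_ins_le: "finite A \<Longrightarrow> B \<subseteq> insert x A \<Longrightarrow> (x \<notin> B \<or> x \<in> A) \<Longrightarrow> card B \<le> card A"
  by (metis card_mono insert_absorb subset_insert)

lemma card_step:
  assumes x: "x = xs@v#u#ys" and y: "y = xs@u#v#ys"
  shows "card (C Q y) \<le> card (C Q x) + (if Q u v then 1 else 0)"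
    and "card (C Q x) \<le> card (C Q y) + (if Q v u then 1 else 0)"
    and "card (D Q x) \<le> card (D Q y) + (if Q u v then 1 else 0)"
proof -
  have s1: "C Q y \<subseteq> insert (u,v) (C Q x)"
    using precedes_swap[of xs u v ys] by (auto simp: C_def x y)
  have s2: "C Q x \<subseteq> insert (v,u) (C Q y)"
    using precedes_swap[of xs v u ys] by (auto simp: C_def x y)
  have s3: "D Q x \<subseteq> insert (u,v) (D Q y)"
    using precedes_swap[of xs v u ys] by (auto simp: D_def x y)
  show "card (C Q y) \<le> card (C Q x) + (if Q u v then 1 else 0)"
  proof (cases "Q u v")
    case True
    have "card (C Q y) \<le> card (insert (u,v) (C Q x))" by (rule card_mono) (simp_all add: finite_C s1)
    also have "\<dots> \<le> card (C Q x) + 1" by (simp add: card_insert_if finite_C)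
    finally show ?thesis using True by simp
  next
    case False
    then have "C Q y \<subseteq> C Q x" using s1 by (auto simp: C_def)
    then show ?thesis using False by (simp add: card_mono finite_C)
  qed
  show "card (C Q x) \<le> card (C Q y) + (if Q v u then 1 else 0)"
  proof (cases "Q v u")
    case True
    have "card (C Q x) \<le> card (insert (v,u) (C Q y))" by (rule card_mono) (simp_all add: finite_C s2)
    also have "\<dots> \<le> card (C Q y) + 1" by (simp add: card_insert_if finite_C)
    finally show ?thesis using True by simp
  next
    case False
    then have "C Q x \<subseteq> C Q y" using s2 by (auto simp: C_def)
    then show ?thesis using False by (simp add: card_mono finite_C)
  qed
  show "card (D Q x) \<le> card (D Q y) + (if Q u v then 1 else 0)"
  proof (cases "Q u v")
    case True
    have "card (D Q x) \<le> card (insert (u,v) (D Q y))" by (rule card_mono) (simp_all add: finite_D s3)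
    also have "\<dots> \<le> card (D Q y) + 1" by (simp add: card_insert_if finite_D)
    finally show ?thesis using True by simp
  next
    case False
    then have "D Q x \<subseteq> D Q y" using s3 by (auto simp: D_def)
    then show ?thesis using False by (simp add: card_mono finite_D)
  qed
qed

lemma dIVT:
  fixes g :: "nat \<Rightarrow> real"
  assumes "g 0 \<le> 0" "g N \<ge> 0" "\<And>k. k < N \<Longrightarrow> g (Suc k) \<le> g k + d" "d \<ge> 0"
  shows "\<exists>k\<le>N. \<bar>g k\<bar> \<le> d"
proof -
  define k where "k = (LEAST k. g k \<ge> 0)"
  have gk: "g k \<ge> 0" unfolding k_def by (rule LeastI[of _ N]) (rule assms(2))
  have kN: "k \<le> N" unfolding k_def by (rule Least_le) (rule assms(2))
  show ?thesis
  proof (cases k)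
    case 0
    then show ?thesis using gk assms(1,4) by (intro exI[of _ 0]) auto
  next
    case (Suc k')
    have "\<not> g k' \<ge> 0" unfolding k_def using Suc k_def not_less_Least[of k' "\<lambda>k. g k \<ge> 0"] by simp
    moreover have "g k \<le> g k' + d" using assms(3)[of k'] Suc kN by simp
    ultimately show ?thesis using gk kN by (intro exI[of _ k]) auto
  qed
qed

definition stepr :: "'a set \<Rightarrow> 'a set \<Rightarrow> 'a list \<Rightarrow> 'a list \<Rightarrow> bool" where
  "stepr A B x y \<longleftrightarrow> (\<exists>xs ys u v. x = xs@v#u#ys \<and> y = xs@u#v#ys \<and> u\<in>A \<and> v\<in>B)"

lemma move:
  assumes "a \<in> A" "set ys \<subseteq> B"
  shows "\<exists>f N. f 0 = xs@ys@a#zs \<and> f N = xs@a#ys@zs \<and>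
    (\<forall>k\<le>N. \<exists>ys1 ys2. ys = ys1@ys2 \<and> f k = xs@ys1@a#ys2@zs) \<and>
    (\<forall>k<N. stepr A B (f k) (f (Suc k)))"
  using assms(2)
proof (induction ys arbitrary: xs)
  case Nil
  show ?case by (intro exI[of _ "\<lambda>_. xs@a#zs"] exI[of _ 0]) auto
next
  case (Cons y ys)
  have sy: "set ys \<subseteq> B" using Cons.prems by simp
  obtain g M where g: "g 0 = (xs@[y])@ys@a#zs" "g M = (xs@[y])@a#ys@zs"
    "\<forall>k\<le>M. \<exists>ys1 ys2. ys = ys1@ys2 \<and> g k = (xs@[y])@ys1@a#ys2@zs"
    "\<forall>k<M. stepr A B (g k) (g (Suc k))" using Cons.IH[of "xs@[y]", OF sy] by blast
  define f where "f k = (if k \<le> M then g k else xs@a#y#ys@zs)" for k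
  have r1: "f 0 = xs@(y#ys)@a#zs" using g by (simp add: f_def)
  have r2: "f (Suc M) = xs@a#(y#ys)@zs" by (simp add: f_def)
  have r3: "\<forall>k\<le>Suc M. \<exists>ys1 ys2. y#ys = ys1@ys2 \<and> f k = xs@ys1@a#ys2@zs"
  proof (intro allI impI)
    fix k assume "k \<le> Suc M"
    show "\<exists>ys1 ys2. y#ys = ys1@ys2 \<and> f k = xs@ys1@a#ys2@zs"
    proof (cases "k \<le> M")
      case True
      then obtain ys1 ys2 where "ys = ys1@ys2" "g k = (xs@[y])@ys1@a#ys2@zs" using g by blast
      then show ?thesis using True by (intro exI[of _ "y#ys1"] exI[of _ ys2]) (auto simp: f_def)
    next
      case False
      then show ?thesis by (intro exI[of _ "[]"] exI[of _ "y#ys"]) (auto simp: f_def)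
    qed
  qed
  have r4: "\<forall>k<Suc M. stepr A B (f k) (f (Suc k))"
  proof (intro allI impI)
    fix k assume "k < Suc M"
    show "stepr A B (f k) (f (Suc k))"
    proof (cases "k < M")
      case True
      then show ?thesis using g by (simp add: f_def)
    next
      case False
      then have "k = M" using \<open>k < Suc M\<close> by simp
      then show ?thesis using g Cons.prems \<open>a \<in> A\<close> unfolding stepr_def f_def
        by (intro exI[of _ xs] exI[of _ "ys@zs"] exI[of _ a] exI[of _ y]) auto
    qed
  qed
  show ?case by (intro exI[of _ f] exI[of _ "Suc M"] conjI r1 r2 r3 r4)
qed

lemma append_in_shuffles: "ys @ xs \<in> shuffles xs ys"
  by (induction ys) (auto intro: Cons_in_shuffles_rightI)

lemma prefix_in_shuffles: "zs \<in> shuffles xs ys2 \<Longrightarrow> ys1 @ zs \<in> shuffles xs (ys1@ys2)"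
  by (induction ys1) (auto intro: Cons_in_shuffles_rightI)

lemma path:
  assumes "set pa \<subseteq> A" "set pb \<subseteq> B"
  shows "\<exists>f N. f 0 = pb@pa \<and> f N = pa@pb \<and> (\<forall>k\<le>N. f k \<in> shuffles pa pb) \<and>
    (\<forall>k<N. stepr A B (f k) (f (Suc k)))"
  using assms(1)
proof (induction pa)
  case Nil
  show ?case by (intro exI[of _ "\<lambda>_. pb"] exI[of _ 0]) auto
next
  case (Cons a pa')
  obtain g M where g: "g 0 = []@pb@a#pa'" "g M = []@a#pb@pa'"
    "\<forall>k\<le>M. \<exists>ys1 ys2. pb = ys1@ys2 \<and> g k = []@ys1@a#ys2@pa'"
    "\<forall>k<M. stepr A B (g k) (g (Suc k))"
    using move[of a A pb B "[]" pa', OF _ assms(2)] Cons.prems by auto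
  obtain h N where h: "h 0 = pb@pa'" "h N = pa'@pb" "\<forall>k\<le>N. h k \<in> shuffles pa' pb"
    "\<forall>k<N. stepr A B (h k) (h (Suc k))" using Cons.IH Cons.prems by auto
  define f where "f k = (if k \<le> M then g k else a # h (k - M))" for k
  have r1: "f 0 = pb @ a#pa'" using g by (simp add: f_def)
  have r2: "f (M+N) = (a#pa')@pb"
  proof (cases "N = 0")
    case True
    then show ?thesis using g h by (simp add: f_def)
  next
    case False
    then show ?thesis using g h by (simp add: f_def)
  qed
  have r3: "\<forall>k\<le>M+N. f k \<in> shuffles (a#pa') pb"
  proof (intro allI impI)
    fix k assume k: "k \<le> M+N"
    show "f k \<in> shuffles (a#pa') pb"
    proof (cases "k \<le> M")
      case True
      then obtain ys1 ys2 where e: "pb = ys1@ys2" "g k = ys1@a#ys2@pa'" using g by auto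
      have "a#(ys2@pa') \<in> shuffles (a#pa') ys2"
        by (rule Cons_in_shuffles_leftI) (rule append_in_shuffles)
      then have "ys1@a#ys2@pa' \<in> shuffles (a#pa') (ys1@ys2)" by (rule prefix_in_shuffles)
      then show ?thesis using True e by (simp add: f_def)
    next
      case False
      then show ?thesis using h k by (auto simp: f_def intro: Cons_in_shuffles_leftI)
    qed
  qed
  have r4: "\<forall>k<M+N. stepr A B (f k) (f (Suc k))"
  proof (intro allI impI)
    fix k assume k: "k < M+N"
    show "stepr A B (f k) (f (Suc k))"
    proof (cases "k < M")
      case True
      then show ?thesis using g by (simp add: f_def)
    next
      case False
      then have "stepr A B (h (k-M)) (h (Suc (k-M)))" using h k by auto
      then have "stepr A B (a # h (k-M)) (a # h (Suc (k-M)))" unfolding stepr_def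
        by (metis append_Cons)
      moreover have "Suc k - M = Suc (k - M)" using False by simp
      ultimately show ?thesis using False g h by (auto simp: f_def)
    qed
  qed
  show ?case by (intro exI[of _ f] exI[of _ "M+N"] conjI r1 r2 r3 r4)
qed


lemma nat_real_if: "(x::nat) \<le> y + (if P then 1 else 0) \<Longrightarrow> real x \<le> real y + (if P then 1 else 0)"
  by (cases P) auto

lemma incr:
  fixes a a' b b' D1 D2 :: real
  assumes "a' \<le> a + (if P then 1 else 0)" "b \<le> b' + (if R then 1 else 0)" "\<not>(P \<and> R)"
    "D1 > 0" "D2 > 0"
  shows "a'/D1 - b'/D2 \<le> a/D1 - b/D2 + max (1/D1) (1/D2)"
proof -
  have 1: "a'/D1 \<le> (a + (if P then 1 else 0))/D1" using assms by (intro divide_right_mono) auto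
  have 2: "b/D2 \<le> (b' + (if R then 1 else 0))/D2" using assms by (intro divide_right_mono) auto
  have h1: "a'/D1 \<le> a/D1 + (if P then 1/D1 else 0)" using 1 by (cases P) (simp_all add: add_divide_distrib)
  have h2: "b/D2 \<le> b'/D2 + (if R then 1/D2 else 0)" using 2 by (cases R) (simp_all add: add_divide_distrib)
  have m1: "1/D1 \<le> max (1/D1) (1/D2)" and m2: "1/D2 \<le> max (1/D1) (1/D2)" 
    by auto
  have m0: "0 \<le> max (1/D1) (1/D2)" using assms(4) by (simp add: le_max_iff_disj)
  show ?thesis
  proof (cases P)
    case True
    then have "\<not> R" using assms by auto
    then show ?thesis using h1 h2 m1 True by simp
  next
    case False
    show ?thesis
    proof (cases R)
      case True
      then show ?thesis using h1 h2 m2 False by simp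
    next
      case F2: False
      then show ?thesis using h1 h2 m0 False by simp
    qed
  qed
qed

lemma len_ge: "length p \<ge> npos Y p + nneg Y p"
proof -
  have "set p = {u \<in> set p. Y u} \<union> {u \<in> set p. \<not> Y u}" by auto
  then have "card (set p) = npos Y p + nneg Y p" unfolding npos_def nneg_def
    by (metis (no_types, lifting) card_Un_disjoint disjoint_iff finite_set finite_Un mem_Collect_eq)
  then show ?thesis using card_length[of p] by simp
qed

lemma step_get:
  assumes "stepr A B x y"
  obtains xs ys u v where "x = xs@v#u#ys" "y = xs@u#v#ys" "u \<in> A" "v \<in> B"
  using assms unfolding stepr_def by blast

lemma two_div:
  fixes a b :: real assumes "a \<ge> 2" "b \<ge> 2" shows "2/(a*b) \<le> 1/a"
proof -
  have "2/(a*b) = (2/b)/a" by simp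
  also have "\<dots> \<le> 1/a" using assms by (intro divide_right_mono) auto
  finally show ?thesis .
qed

lemma part1:
  fixes pa pb :: "'i list" and Y :: "'i \<Rightarrow> bool"
  assumes "set pa \<inter> set pb = {}"
    and "npos Y pa \<ge> 1" and "nneg Y pa \<ge> 1" and "npos Y pb \<ge> 1" and "nneg Y pb \<ge> 1"
  shows "\<exists>ord. cross_group_ordering pa pb ord \<and>
            delta_URF ord pa pb \<le> min (1 / real (length pa)) (1 / real (length pb))"
proof -
  obtain f N where f: "f 0 = pb@pa" "f N = pa@pb" "\<forall>k\<le>N. f k \<in> shuffles pa pb"
    "\<forall>k<N. stepr (set pa) (set pb) (f k) (f (Suc k))" using path[of pa "set pa" pb "set pb"] by auto
  define Q where "Q = (\<lambda>p q. p \<in> set pa \<and> q \<in> set pb)"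
  define G where "G k = real (card (C Q (f k))) - real (card (D Q (f k)))" for k
  have e: "delta_URF ord pa pb = \<bar>real (card (C Q ord)) - real (card (D Q ord))\<bar>
     / (real (length pa) * real (length pb))" for ord
  proof -
    have "{(u, v). u \<in> set pa \<and> v \<in> set pb \<and> precedes ord u v} = C Q ord"
      "{(u, v). u \<in> set pa \<and> v \<in> set pb \<and> precedes ord v u} = D Q ord"
      by (auto simp: C_def D_def Q_def)
    then show ?thesis by (simp add: delta_URF_def)
  qed
  have c0: "C Q (pb@pa) = {}" using assms(1) by (auto simp: C_def Q_def precedes_append dest: precedes_set)
  have d0: "D Q (pa@pb) = {}" using assms(1) by (auto simp: D_def Q_def precedes_append dest: precedes_set)
  have "\<exists>k\<le>N. \<bar>G k\<bar> \<le> 2"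
  proof (rule dIVT)
    show "G 0 \<le> 0" using f c0 by (simp add: G_def)
    show "G N \<ge> 0" using f d0 by (simp add: G_def)
    show "G (Suc k) \<le> G k + 2" if kN: "k < N" for k
    proof -
      obtain xs ys u v where s: "f k = xs@v#u#ys" "f (Suc k) = xs@u#v#ys" "u \<in> set pa" "v \<in> set pb"
        by (rule step_get[OF f(4)[rule_format, OF kN]])
      have 1: "card (C Q (f (Suc k))) \<le> card (C Q (f k)) + 1"
        using card_step(1)[OF s(1,2), of Q] s by (simp add: Q_def)
      have 2: "card (D Q (f k)) \<le> card (D Q (f (Suc k))) + 1"
        using card_step(3)[OF s(1,2), of Q] s by (simp add: Q_def)
      show ?thesis using 1 2 unfolding G_def by linarith
    qed
  qed simp
  then obtain k where k: "k \<le> N" "\<bar>G k\<bar> \<le> 2" by blast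
  have na: "real (length pa) \<ge> 2" using len_ge[where p=pa and Y=Y] assms by linarith
  have nb: "real (length pb) \<ge> 2" using len_ge[where p=pb and Y=Y] assms by linarith
  have "delta_URF (f k) pa pb = \<bar>G k\<bar> / (real (length pa) * real (length pb))"
    by (simp add: e G_def)
  also have "\<dots> \<le> 2 / (real (length pa) * real (length pb))"
    using k na nb by (intro divide_right_mono) auto
  also have "\<dots> \<le> min (1 / real (length pa)) (1 / real (length pb))"
    using two_div[OF na nb] two_div[OF nb na] by (simp add: mult.commute)
  finally show ?thesis using f k unfolding cross_group_ordering_def by blast
qed


lemma part2:
  fixes pa pb :: "'i list" and Y :: "'i \<Rightarrow> bool"
  assumes "set pa \<inter> set pb = {}"
    and "npos Y pa \<ge> 1" and "nneg Y pa \<ge> 1" and "npos Y pb \<ge> 1" and "nneg Y pb \<ge> 1"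
  shows "\<exists>ord. cross_group_ordering pa pb ord \<and>
            delta_xAUC Y ord pa pb \<le>
              min (max (1 / real (npos Y pb)) (1 / real (nneg Y pb)))
                  (max (1 / real (npos Y pa)) (1 / real (nneg Y pa)))"
proof -
  obtain f N where f: "f 0 = pb@pa" "f N = pa@pb" "\<forall>k\<le>N. f k \<in> shuffles pa pb"
    "\<forall>k<N. stepr (set pa) (set pb) (f k) (f (Suc k))" using path[of pa "set pa" pb "set pb"] by auto
  define Qa where "Qa = (\<lambda>p q. p \<in> set pa \<and> Y p \<and> q \<in> set pb \<and> \<not> Y q)"
  define Qb where "Qb = (\<lambda>p q. p \<in> set pb \<and> Y p \<and> q \<in> set pa \<and> \<not> Y q)"
  define D1 where "D1 = real (npos Y pa) * real (nneg Y pb)"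
  define D2 where "D2 = real (npos Y pb) * real (nneg Y pa)"
  have D1: "D1 > 0" and D2: "D2 > 0" using assms by (auto simp: D1_def D2_def)
  define G where "G k = real (card (C Qa (f k))) / D1 - real (card (C Qb (f k))) / D2" for k
  have e: "delta_xAUC Y ord pa pb = \<bar>real (card (C Qa ord)) / D1 - real (card (C Qb ord)) / D2\<bar>" for ord
  proof -
    have "{(u, v). u \<in> set pa \<and> Y u \<and> v \<in> set pb \<and> \<not> Y v \<and> precedes ord u v} = C Qa ord"
      "{(u, v). u \<in> set pb \<and> Y u \<and> v \<in> set pa \<and> \<not> Y v \<and> precedes ord u v} = C Qb ord"
      by (auto simp: C_def Qa_def Qb_def)
    then show ?thesis by (simp add: delta_xAUC_def xAUC_def D1_def D2_def)
  qed
  have c0: "C Qa (pb@pa) = {}" using assms(1) by (auto simp: C_def Qa_def precedes_append dest: precedes_set)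
  have d0: "C Qb (pa@pb) = {}" using assms(1) by (auto simp: C_def Qb_def precedes_append dest: precedes_set)
  define d where "d = max (1/D1) (1/D2)"
  have "\<exists>k\<le>N. \<bar>G k\<bar> \<le> d"
  proof (rule dIVT)
    show "G 0 \<le> 0" using f c0 D2 by (simp add: G_def)
    show "G N \<ge> 0" using f d0 D1 by (simp add: G_def)
    show "G (Suc k) \<le> G k + d" if kN: "k < N" for k
    proof -
      obtain xs ys u v where s: "f k = xs@v#u#ys" "f (Suc k) = xs@u#v#ys" "u \<in> set pa" "v \<in> set pb"
        by (rule step_get[OF f(4)[rule_format, OF kN]])
      have 1: "real (card (C Qa (f (Suc k)))) \<le> real (card (C Qa (f k))) + (if Y u \<and> \<not> Y v then 1 else 0)"
        using card_step(1)[OF s(1,2), of Qa] s by (intro nat_real_if) (simp add: Qa_def)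
      have 2: "real (card (C Qb (f k))) \<le> real (card (C Qb (f (Suc k)))) + (if Y v \<and> \<not> Y u then 1 else 0)"
        using card_step(2)[OF s(1,2), of Qb] s by (intro nat_real_if) (simp add: Qb_def)
      show ?thesis unfolding G_def d_def by (rule incr[OF 1 2 _ D1 D2]) auto
    qed
    show "0 \<le> d" using D1 by (simp add: d_def le_max_iff_disj)
  qed
  then obtain k where k: "k \<le> N" "\<bar>G k\<bar> \<le> d" by blast
  have n: "real (npos Y pa) \<ge> 1" "real (nneg Y pa) \<ge> 1" "real (npos Y pb) \<ge> 1" "real (nneg Y pb) \<ge> 1"
    using assms by auto
  have b1: "1/D1 \<le> 1/real (nneg Y pb)" "1/D1 \<le> 1/real (npos Y pa)"
    using n unfolding D1_def by (auto simp: field_simps)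
  have b2: "1/D2 \<le> 1/real (npos Y pb)" "1/D2 \<le> 1/real (nneg Y pa)"
    using n unfolding D2_def by (auto simp: field_simps)
  have dl: "d \<le> min (max (1 / real (npos Y pb)) (1 / real (nneg Y pb)))
                  (max (1 / real (npos Y pa)) (1 / real (nneg Y pa)))"
    unfolding d_def by (intro min.boundedI max.boundedI) (use b1 b2 in \<open>simp add: le_max_iff_disj\<close>)+
  have de: "delta_xAUC Y (f k) pa pb = \<bar>G k\<bar>" by (simp add: e G_def)
  have m: "f k \<in> shuffles pa pb" using f(3) k(1) by blast
  have bnd: "\<bar>G k\<bar> \<le> d" by (rule k(2))
  have c1: "cross_group_ordering pa pb (f k)" using m unfolding cross_group_ordering_def .
  note c2 = order_trans[OF bnd dl, folded de]
  show ?thesis by (rule exI[of _ "f k"], rule conjI[OF c1 c2])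
qed

lemma part3:
  fixes pa pb :: "'i list" and Y :: "'i \<Rightarrow> bool"
  assumes "set pa \<inter> set pb = {}"
    and "npos Y pa \<ge> 1" and "nneg Y pa \<ge> 1" and "npos Y pb \<ge> 1" and "nneg Y pb \<ge> 1"
  shows "\<exists>ord. cross_group_ordering pa pb ord \<and>
            delta_PRF Y ord pa pb \<le>
              min (max (real (nneg Y pb) / (real (npos Y pa) * real (nneg Y pa + nneg Y pb)))
                       (1 / real (nneg Y pa + nneg Y pb)))
                  (max (real (nneg Y pa) / (real (npos Y pb) * real (nneg Y pa + nneg Y pb)))
                       (1 / real (nneg Y pa + nneg Y pb)))"
proof -
  obtain f N where f: "f 0 = pb@pa" "f N = pa@pb" "\<forall>k\<le>N. f k \<in> shuffles pa pb"
    "\<forall>k<N. stepr (set pa) (set pb) (f k) (f (Suc k))" using path[of pa "set pa" pb "set pb"] by auto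
  define Qa where "Qa = (\<lambda>p q. p \<in> set pa \<and> Y p \<and> q \<in> set pa \<union> set pb \<and> \<not> Y q)"
  define Qb where "Qb = (\<lambda>p q. p \<in> set pb \<and> Y p \<and> q \<in> set pb \<union> set pa \<and> \<not> Y q)"
  define n0 where "n0 = real (nneg Y pa + nneg Y pb)"
  define D1 where "D1 = real (npos Y pa) * n0"
  define D2 where "D2 = real (npos Y pb) * n0"
  have n: "real (npos Y pa) \<ge> 1" "real (nneg Y pa) \<ge> 1" "real (npos Y pb) \<ge> 1" "real (nneg Y pb) \<ge> 1"
    using assms by auto
  have n0: "n0 \<ge> 1" using n by (simp add: n0_def)
  have D1: "D1 > 0" and D2: "D2 > 0" using n n0 by (auto simp: D1_def D2_def)
  define G where "G k = real (card (C Qa (f k))) / D1 - real (card (C Qb (f k))) / D2" for k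
  have e: "delta_PRF Y ord pa pb = \<bar>real (card (C Qa ord)) / D1 - real (card (C Qb ord)) / D2\<bar>" for ord
  proof -
    have "{(u, v). u \<in> set pa \<and> Y u \<and> v \<in> set pa \<union> set pb \<and> \<not> Y v \<and> precedes ord u v} = C Qa ord"
      "{(u, v). u \<in> set pb \<and> Y u \<and> v \<in> set pb \<union> set pa \<and> \<not> Y v \<and> precedes ord u v} = C Qb ord"
      by (auto simp: C_def Qa_def Qb_def)
    moreover have "real (nneg Y pb) + real (nneg Y pa) = real (nneg Y pa) + real (nneg Y pb)" by simp
    ultimately show ?thesis by (simp add: delta_PRF_def PRF_def D1_def D2_def n0_def add.commute)
  qed
  define P1 where "P1 = {u \<in> set pa. Y u}"
  define N1 where "N1 = {u \<in> set pa. \<not> Y u}"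
  define P2 where "P2 = {u \<in> set pb. Y u}"
  define N2 where "N2 = {u \<in> set pb. \<not> Y u}"
  have cards: "card P1 = npos Y pa" "card N1 = nneg Y pa" "card P2 = npos Y pb" "card N2 = nneg Y pb"
    by (simp_all add: P1_def N1_def P2_def N2_def npos_def nneg_def)
  have fin: "finite P1" "finite N1" "finite P2" "finite N2" by (simp_all add: P1_def N1_def P2_def N2_def)
  have s1: "C Qa (pb@pa) \<subseteq> P1 \<times> N1" using assms(1)
    by (auto simp: C_def Qa_def P1_def N1_def precedes_append dest: precedes_set)
  have s2: "P2 \<times> N1 \<subseteq> C Qb (pb@pa)"
    by (auto simp: C_def Qb_def P2_def N1_def precedes_append)
  have s3: "P1 \<times> N2 \<subseteq> C Qa (pa@pb)"
    by (auto simp: C_def Qa_def P1_def N2_def precedes_append)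
  have s4: "C Qb (pa@pb) \<subseteq> P2 \<times> N2" using assms(1)
    by (auto simp: C_def Qb_def P2_def N2_def precedes_append dest: precedes_set)
  have c1: "card (C Qa (pb@pa)) \<le> npos Y pa * nneg Y pa"
    using card_mono[OF _ s1] fin cards by (simp add: card_cartesian_product)
  have c2: "card (C Qb (pb@pa)) \<ge> npos Y pb * nneg Y pa"
    using card_mono[OF finite_C s2] cards by (simp add: card_cartesian_product)
  have c3: "card (C Qa (pa@pb)) \<ge> npos Y pa * nneg Y pb"
    using card_mono[OF finite_C s3] cards by (simp add: card_cartesian_product)
  have c4: "card (C Qb (pa@pb)) \<le> npos Y pb * nneg Y pb"
    using card_mono[OF _ s4] fin cards by (simp add: card_cartesian_product)
  define d where "d = max (1/D1) (1/D2)"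
  have "\<exists>k\<le>N. \<bar>G k\<bar> \<le> d"
  proof (rule dIVT)
    have "real (card (C Qa (pb@pa))) / D1 \<le> real (npos Y pa * nneg Y pa) / D1"
      by (intro divide_right_mono, unfold of_nat_le_iff) (use c1 D1 in auto)
    also have "\<dots> = real (nneg Y pa) / n0" using n by (simp add: D1_def)
    also have "\<dots> = real (npos Y pb * nneg Y pa) / D2" using n by (simp add: D2_def)
    also have "\<dots> \<le> real (card (C Qb (pb@pa))) / D2"
      by (intro divide_right_mono, unfold of_nat_le_iff) (use c2 D2 in auto)
    finally show "G 0 \<le> 0" using f by (simp add: G_def)
    have "real (card (C Qb (pa@pb))) / D2 \<le> real (npos Y pb * nneg Y pb) / D2"
      by (intro divide_right_mono, unfold of_nat_le_iff) (use c4 D2 in auto)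
    also have "\<dots> = real (nneg Y pb) / n0" using n by (simp add: D2_def)
    also have "\<dots> = real (npos Y pa * nneg Y pb) / D1" using n by (simp add: D1_def)
    also have "\<dots> \<le> real (card (C Qa (pa@pb))) / D1"
      by (intro divide_right_mono, unfold of_nat_le_iff) (use c3 D1 in auto)
    finally show "G N \<ge> 0" using f by (simp add: G_def)
    show "G (Suc k) \<le> G k + d" if kN: "k < N" for k
    proof -
      obtain xs ys u v where s: "f k = xs@v#u#ys" "f (Suc k) = xs@u#v#ys" "u \<in> set pa" "v \<in> set pb"
        by (rule step_get[OF f(4)[rule_format, OF kN]])
      have 1: "real (card (C Qa (f (Suc k)))) \<le> real (card (C Qa (f k))) + (if Y u \<and> \<not> Y v then 1 else 0)"
        using card_step(1)[OF s(1,2), of Qa] s by (intro nat_real_if) (simp add: Qa_def)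
      have 2: "real (card (C Qb (f k))) \<le> real (card (C Qb (f (Suc k)))) + (if Y v \<and> \<not> Y u then 1 else 0)"
        using card_step(2)[OF s(1,2), of Qb] s by (intro nat_real_if) (simp add: Qb_def)
      show ?thesis unfolding G_def d_def by (rule incr[OF 1 2 _ D1 D2]) auto
    qed
    show "0 \<le> d" using D1 by (simp add: d_def le_max_iff_disj)
  qed
  then obtain k where k: "k \<le> N" "\<bar>G k\<bar> \<le> d" by blast
  have b1: "1/D1 \<le> 1/n0" using n n0 unfolding D1_def by (auto simp: field_simps)
  have b2: "1/D2 \<le> 1/n0" using n n0 unfolding D2_def by (auto simp: field_simps)
  have "d \<le> 1/n0" unfolding d_def using b1 b2 by simp
  then have dl: "d \<le> min (max (real (nneg Y pb) / (real (npos Y pa) * real (nneg Y pa + nneg Y pb)))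
                       (1 / real (nneg Y pa + nneg Y pb)))
                  (max (real (nneg Y pa) / (real (npos Y pb) * real (nneg Y pa + nneg Y pb)))
                       (1 / real (nneg Y pa + nneg Y pb)))"
    unfolding n0_def by (simp add: le_max_iff_disj)
  have de: "delta_PRF Y (f k) pa pb = \<bar>G k\<bar>" by (simp add: e G_def)
  have m: "f k \<in> shuffles pa pb" using f(3) k(1) by blast
  have bnd: "\<bar>G k\<bar> \<le> d" by (rule k(2))
  have c1: "cross_group_ordering pa pb (f k)" using m unfolding cross_group_ordering_def .
  note c2 = order_trans[OF bnd dl, folded de]
  show ?thesis by (rule exI[of _ "f k"], rule conjI[OF c1 c2])
qed

theorem proposition1:
  fixes pa pb :: "'i list" and Y :: "'i \<Rightarrow> bool"
  assumes "distinct pa" and "distinct pb" and "set pa \<inter> set pb = {}"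
    and "npos Y pa \<ge> 1" and "nneg Y pa \<ge> 1" and "npos Y pb \<ge> 1" and "nneg Y pb \<ge> 1"
  shows "(\<exists>ord. cross_group_ordering pa pb ord \<and>
            delta_URF ord pa pb \<le> min (1 / real (length pa)) (1 / real (length pb)))
       \<and> (\<exists>ord. cross_group_ordering pa pb ord \<and>
            delta_xAUC Y ord pa pb \<le>
              min (max (1 / real (npos Y pb)) (1 / real (nneg Y pb)))
                  (max (1 / real (npos Y pa)) (1 / real (nneg Y pa))))
       \<and> (\<exists>ord. cross_group_ordering pa pb ord \<and>
            delta_PRF Y ord pa pb \<le>
              min (max (real (nneg Y pb) / (real (npos Y pa) * real (nneg Y pa + nneg Y pb)))
                       (1 / real (nneg Y pa + nneg Y pb)))
                  (max (real (nneg Y pa) / (real (npos Y pb) * real (nneg Y pa + nneg Y pb)))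
                       (1 / real (nneg Y pa + nneg Y pb))))"
  using part1[OF assms(3-7)] part2[OF assms(3-7)] part3[OF assms(3-7)] by blast

end
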